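(* Let $w,c\ge 0$ and let $(W_1,\ldots,W_n)$ be a $w$-colourable grading of a graph $G$. Let $H$ be a subgraph of $G$ (not necessarily induced) with $\chi(H)>w+2(c+\chi^1(G))$. Then there is an edge $uv$ of $H$ and a subset $X$ of $V(G)$ such that: $G[X]$ is connected; $u,v$ are both earlier than every vertex in $X$; exactly one of $u,v$ has a $G$-neighbour in $X$; and $\chi(X)>c$.
   Context: Graphs are finite and simple. For $X\subseteq V(G)$, $\chi(X)$ means $\chi(G[X])$. A grading of $G$ is a sequence $(W_1,\ldots,W_n)$ of pairwise disjoint subsets of $V(G)$ with union $V(G)$; it is $w$-colourable if $\chi(G[W_i])\le w$ for all $i$. A vertex $u$ is earlier than $v$ if $u\in W_i$, $v\in W_j$ with $i<j$. For $v\in V(G)$ and integer $\rho\ge 0$, $N^{\rho}[v]$ is the set of vertices at distance at most $\rho$ from $v$ in $G$; for $\rho\ge1$, $\chi^{\rho}(G)$ is the maximum of $\chi(N^{\rho}[v])$ over all $v\in V(G)$ (and $0$ for the null graph). *)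

theory Defs
  imports Main
begin

definition simple_graph :: "'a set \<Rightarrow> ('a \<Rightarrow> 'a \<Rightarrow> bool) \<Rightarrow> bool" where
  "simple_graph V E \<longleftrightarrow> finite V \<and> (\<forall>x y. E x y \<longrightarrow> x \<in> V \<and> y \<in> V \<and> x \<noteq> y \<and> E y x)"

definition subgraph :: "'a set \<Rightarrow> ('a \<Rightarrow> 'a \<Rightarrow> bool) \<Rightarrow> 'a set \<Rightarrow> ('a \<Rightarrow> 'a \<Rightarrow> bool) \<Rightarrow> bool" where
  "subgraph VH EH V E \<longleftrightarrow> simple_graph VH EH \<and> VH \<subseteq> V \<and> (\<forall>x y. EH x y \<longrightarrow> E x y)"

definition colouring :: "('a \<Rightarrow> 'a \<Rightarrow> bool) \<Rightarrow> 'a set \<Rightarrow> nat \<Rightarrow> ('a \<Rightarrow> nat) \<Rightarrow> bool" where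
  "colouring E X k f \<longleftrightarrow> (\<forall>x\<in>X. f x < k) \<and> (\<forall>x\<in>X. \<forall>y\<in>X. E x y \<longrightarrow> f x \<noteq> f y)"

text \<open>Chromatic number of the graph with vertex set X and adjacency E restricted to X;
  for X \<subseteq> V(G) this is chi(G[X]).\<close>
definition chi :: "('a \<Rightarrow> 'a \<Rightarrow> bool) \<Rightarrow> 'a set \<Rightarrow> nat" where
  "chi E X = (LEAST k. \<exists>f. colouring E X k f)"

fun ball :: "'a set \<Rightarrow> ('a \<Rightarrow> 'a \<Rightarrow> bool) \<Rightarrow> 'a \<Rightarrow> nat \<Rightarrow> 'a set" where
  "ball V E v 0 = {v}"
| "ball V E v (Suc r) = ball V E v r \<union> {y \<in> V. \<exists>x \<in> ball V E v r. E x y}"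

definition chi_rho :: "'a set \<Rightarrow> ('a \<Rightarrow> 'a \<Rightarrow> bool) \<Rightarrow> nat \<Rightarrow> nat" where
  "chi_rho V E \<rho> = (if V = {} then 0 else Max ((\<lambda>v. chi E (ball V E v \<rho>)) ` V))"

definition connected_in :: "('a \<Rightarrow> 'a \<Rightarrow> bool) \<Rightarrow> 'a set \<Rightarrow> bool" where
  "connected_in E X \<longleftrightarrow> X \<noteq> {} \<and>
     (\<forall>x\<in>X. \<forall>y\<in>X. (\<lambda>a b. a \<in> X \<and> b \<in> X \<and> E a b)\<^sup>*\<^sup>* x y)"

text \<open>Grading (W_1,...,W_n), given as W i for i < n (0-based).\<close>
definition grading :: "'a set \<Rightarrow> nat \<Rightarrow> (nat \<Rightarrow> 'a set) \<Rightarrow> bool" where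
  "grading V n W \<longleftrightarrow> (\<forall>i<n. \<forall>j<n. i \<noteq> j \<longrightarrow> W i \<inter> W j = {}) \<and> (\<Union>i<n. W i) = V"

definition colourable_grading :: "('a \<Rightarrow> 'a \<Rightarrow> bool) \<Rightarrow> 'a set \<Rightarrow> nat \<Rightarrow> (nat \<Rightarrow> 'a set) \<Rightarrow> nat \<Rightarrow> bool" where
  "colourable_grading E V n W w \<longleftrightarrow> grading V n W \<and> (\<forall>i<n. chi E (W i) \<le> w)"

definition earlier :: "nat \<Rightarrow> (nat \<Rightarrow> 'a set) \<Rightarrow> 'a \<Rightarrow> 'a \<Rightarrow> bool" where
  "earlier n W u v \<longleftrightarrow> (\<exists>i<n. \<exists>j<n. i < j \<and> u \<in> W i \<and> v \<in> W j)"

end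

theory Submission
  imports Defs
begin

lemma colouring_mono_k: "colouring E X k f \<Longrightarrow> k \<le> k' \<Longrightarrow> colouring E X k' f"
  unfolding colouring_def by force

lemma colouring_subset: "colouring E Y k f \<Longrightarrow> X \<subseteq> Y \<Longrightarrow> colouring E X k f"
  unfolding colouring_def by blast

lemma colouring_exists:
  assumes "finite X" "irreflp E"
  shows "\<exists>f. colouring E X (card X) f"
proof -
  obtain h where h: "bij_betw h X {0..<card X}" using ex_bij_betw_finite_nat[OF assms(1)] by blast
  have "colouring E X (card X) h"
    unfolding colouring_def
  proof (intro conjI ballI impI)
    fix x assume "x \<in> X" thus "h x < card X" using h by (auto simp: bij_betw_def)
  next
    fix x y assume "x \<in> X" "y \<in> X" "E x y"
    hence "x \<noteq> y" using assms(2) by (auto dest: irreflpD)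
    thus "h x \<noteq> h y" using h \<open>x \<in> X\<close> \<open>y \<in> X\<close> by (auto simp: bij_betw_def inj_on_def)
  qed
  thus ?thesis by blast
qed

lemma chi_colouring:
  assumes "finite X" "irreflp E"
  shows "\<exists>f. colouring E X (chi E X) f"
proof -
  have "\<exists>k f. colouring E X k f" using colouring_exists[OF assms] by blast
  thus ?thesis unfolding chi_def by (rule LeastI_ex)
qed

lemma chi_le: "colouring E X k f \<Longrightarrow> chi E X \<le> k"
  unfolding chi_def by (rule Least_le) blast

lemma chi_mono:
  assumes "X \<subseteq> Y" "finite Y" "irreflp E"
  shows "chi E X \<le> chi E Y"
proof -
  obtain f where "colouring E Y (chi E Y) f" using chi_colouring[OF assms(2,3)] by blast
  hence "colouring E X (chi E Y) f" using assms(1) by (rule colouring_subset)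
  thus ?thesis by (rule chi_le)
qed

lemma colouring_union:
  assumes "colouring E A a f" "colouring E B b g"
  shows "\<exists>h. colouring E (A \<union> B) (a + b) h"
proof -
  define h where "h x = (if x \<in> A then f x else a + g x)" for x
  have "colouring E (A \<union> B) (a + b) h"
    unfolding colouring_def
  proof (intro conjI ballI impI)
    fix x assume "x \<in> A \<union> B" thus "h x < a + b" using assms unfolding colouring_def h_def by force
  next
    fix x y assume xy: "x \<in> A \<union> B" "y \<in> A \<union> B" "E x y"
    show "h x \<noteq> h y"
    proof (cases "x \<in> A"; cases "y \<in> A")
      assume "x \<in> A" "y \<in> A" thus ?thesis using assms(1) xy unfolding colouring_def h_def by auto
    next
      assume "x \<in> A" "y \<notin> A" thus ?thesis using assms(1) xy unfolding colouring_def h_def by force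
    next
      assume "x \<notin> A" "y \<in> A" thus ?thesis using assms(1) xy unfolding colouring_def h_def by force
    next
      assume "x \<notin> A" "y \<notin> A" thus ?thesis using assms(2) xy unfolding colouring_def h_def by auto
    qed
  qed
  thus ?thesis by blast
qed

lemma chi_union:
  assumes "finite A" "finite B" "irreflp E"
  shows "chi E (A \<union> B) \<le> chi E A + chi E B"
proof -
  obtain f where "colouring E A (chi E A) f" using chi_colouring[OF assms(1,3)] by blast
  moreover obtain g where "colouring E B (chi E B) g" using chi_colouring[OF assms(2,3)] by blast
  ultimately obtain h where "colouring E (A \<union> B) (chi E A + chi E B) h"
    using colouring_union by blast
  thus ?thesis by (rule chi_le)
qed

lemma piecewise:
  assumes "\<forall>x\<in>A. x \<in> S x"
    and "\<forall>x\<in>A. \<forall>y\<in>A. F x y \<longrightarrow> S x = S y \<and> E x y"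
    and "\<forall>x\<in>A. \<exists>g. colouring E (S x) k g"
  shows "\<exists>f. colouring F A k f"
proof -
  define G where "G x = (SOME g. colouring E (S x) k g)" for x
  have G: "colouring E (S x) k (G x)" if "x \<in> A" for x
    unfolding G_def using assms(3) that by (metis someI_ex)
  define f where "f x = G x x" for x
  have "colouring F A k f"
    unfolding colouring_def
  proof (intro conjI ballI impI)
    fix x assume "x \<in> A" thus "f x < k" using G assms(1) unfolding f_def colouring_def by blast
  next
    fix x y assume xy: "x \<in> A" "y \<in> A" "F x y"
    hence "S x = S y" "E x y" using assms(2) by auto
    hence "G x = G y" unfolding G_def by simp
    moreover have "x \<in> S x" "y \<in> S x" using assms(1) xy \<open>S x = S y\<close> by auto
    ultimately show "f x \<noteq> f y" using G[OF xy(1)] \<open>E x y\<close> unfolding f_def colouring_def by metis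
  qed
  thus ?thesis by blast
qed

lemma piece_colouring:
  assumes "finite X" "irreflp E" "chi E X \<le> k"
  shows "\<exists>g. colouring E X k g"
  using chi_colouring[OF assms(1,2)] colouring_mono_k assms(3) by blast

definition gcomp :: "('a \<Rightarrow> 'a \<Rightarrow> bool) \<Rightarrow> 'a set \<Rightarrow> 'a \<Rightarrow> 'a set" where
  "gcomp E A x = {y. (\<lambda>a b. a \<in> A \<and> b \<in> A \<and> E a b)\<^sup>*\<^sup>* x y}"

lemma gcomp_refl: "x \<in> gcomp E A x"
  unfolding gcomp_def by simp

lemma gcomp_sub: "x \<in> A \<Longrightarrow> gcomp E A x \<subseteq> A"
proof
  fix y assume "x \<in> A" "y \<in> gcomp E A x"
  hence "(\<lambda>a b. a \<in> A \<and> b \<in> A \<and> E a b)\<^sup>*\<^sup>* x y" unfolding gcomp_def by simp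
  thus "y \<in> A" using \<open>x \<in> A\<close> by (induction rule: rtranclp_induct) auto
qed

lemma gcomp_step: "a \<in> gcomp E A x \<Longrightarrow> a \<in> A \<Longrightarrow> b \<in> A \<Longrightarrow> E a b \<Longrightarrow> b \<in> gcomp E A x"
  unfolding gcomp_def by (auto intro: rtranclp.rtrancl_into_rtrancl)

lemma rtranclp_sym:
  assumes "\<And>a b. R a b \<Longrightarrow> R b a" "R\<^sup>*\<^sup>* x y"
  shows "R\<^sup>*\<^sup>* y x"
  using assms(2) by (induction rule: rtranclp_induct) (auto intro: converse_rtranclp_into_rtranclp assms(1))

lemma gcomp_sym_mem:
  assumes "\<And>a b. E a b \<Longrightarrow> E b a" "y \<in> gcomp E A x"
  shows "x \<in> gcomp E A y"
  using assms unfolding gcomp_def by (auto intro: rtranclp_sym)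

lemma gcomp_eq:
  assumes "\<And>a b. E a b \<Longrightarrow> E b a" "y \<in> gcomp E A x"
  shows "gcomp E A y = gcomp E A x"
proof -
  have "x \<in> gcomp E A y" using gcomp_sym_mem assms by metis
  thus ?thesis using assms(2) unfolding gcomp_def by (auto intro: rtranclp_trans)
qed

lemma gcomp_mono: "A \<subseteq> B \<Longrightarrow> gcomp E A x \<subseteq> gcomp E B x"
proof
  fix y assume "A \<subseteq> B" "y \<in> gcomp E A x"
  hence "(\<lambda>a b. a \<in> A \<and> b \<in> A \<and> E a b)\<^sup>*\<^sup>* x y" unfolding gcomp_def by simp
  hence "(\<lambda>a b. a \<in> B \<and> b \<in> B \<and> E a b)\<^sup>*\<^sup>* x y"
    by (rule rtranclp_mono[THEN predicate2D, rotated]) (use \<open>A \<subseteq> B\<close> in auto)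
  thus "y \<in> gcomp E B x" unfolding gcomp_def by simp
qed

lemma gcomp_connected:
  assumes sym: "\<And>a b. E a b \<Longrightarrow> E b a" and "x \<in> A"
  shows "connected_in E (gcomp E A x)"
proof -
  let ?C = "gcomp E A x"
  let ?R = "\<lambda>a b. a \<in> ?C \<and> b \<in> ?C \<and> E a b"
  have lift: "?R\<^sup>*\<^sup>* x a" if "a \<in> ?C" for a
  proof -
    have "(\<lambda>a b. a \<in> A \<and> b \<in> A \<and> E a b)\<^sup>*\<^sup>* x a" using that unfolding gcomp_def by simp
    thus ?thesis
    proof (induction rule: rtranclp_induct)
      case base thus ?case by simp
    next
      case (step y z)
      have "y \<in> ?C" using step(1) unfolding gcomp_def by simp
      moreover have "z \<in> ?C" using step(1,2) unfolding gcomp_def by (auto intro: rtranclp.rtrancl_into_rtrancl)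
      ultimately show ?case using step by (auto intro: rtranclp.rtrancl_into_rtrancl)
    qed
  qed
  have "?R\<^sup>*\<^sup>* a b" if "a \<in> ?C" "b \<in> ?C" for a b
  proof -
    have "?R\<^sup>*\<^sup>* a x" using lift[OF that(1)] by (rule rtranclp_sym[rotated]) (auto intro: sym)
    thus ?thesis using lift[OF that(2)] by (rule rtranclp_trans)
  qed
  thus ?thesis unfolding connected_in_def using gcomp_refl[of x E A] by blast
qed

lemma connected_exit:
  assumes "connected_in E Q" "X \<subseteq> Q" "a \<in> X" "b \<in> Q" "b \<notin> X"
  shows "\<exists>x0\<in>X. \<exists>p\<in>Q. p \<notin> X \<and> E x0 p"
proof -
  have "(\<lambda>a b. a \<in> Q \<and> b \<in> Q \<and> E a b)\<^sup>*\<^sup>* a b" using assms unfolding connected_in_def by blast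
  thus ?thesis using assms(5)
  proof (induction rule: rtranclp_induct)
    case base thus ?case using assms(3) by simp
  next
    case (step y z)
    show ?case
    proof (cases "y \<in> X")
      case True thus ?thesis using step by blast
    next
      case False thus ?thesis using step by blast
    qed
  qed
qed

lemma connected_insert:
  assumes sym: "\<And>a b. E a b \<Longrightarrow> E b a" and "connected_in E X" "x0 \<in> X" "E x0 p"
  shows "connected_in E (insert p X)"
proof -
  let ?R = "\<lambda>a b. a \<in> insert p X \<and> b \<in> insert p X \<and> E a b"
  have lift: "?R\<^sup>*\<^sup>* a b" if "a \<in> X" "b \<in> X" for a b
  proof -
    have "(\<lambda>a b. a \<in> X \<and> b \<in> X \<and> E a b)\<^sup>*\<^sup>* a b" using assms(2) that unfolding connected_in_def by blast
    thus ?thesis by (rule rtranclp_mono[THEN predicate2D, rotated]) auto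
  qed
  have px: "?R p x0" "?R x0 p" using assms(3,4) sym by auto
  have "?R\<^sup>*\<^sup>* a b" if "a \<in> insert p X" "b \<in> insert p X" for a b
  proof -
    have ab: "a \<in> insert p X" "b \<in> insert p X" by fact+
    consider "a = p" "b = p" | "a = p" "b \<in> X" | "a \<in> X" "b = p" | "a \<in> X" "b \<in> X"
      using ab by blast
    thus ?thesis
    proof cases
      case 1 thus ?thesis by simp
    next
      case 2 thus ?thesis using px lift[OF assms(3), of b] by (auto intro: converse_rtranclp_into_rtranclp)
    next
      case 3 thus ?thesis using px lift[of a x0] assms(3) by (auto intro: rtranclp.rtrancl_into_rtrancl)
    next
      case 4 thus ?thesis using lift by blast
    qed
  qed
  thus ?thesis unfolding connected_in_def by blast
qed

lemma chi_by_comps: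
  assumes "finite A" "irreflp E" "\<And>a b. E a b \<Longrightarrow> E b a"
    and "\<forall>z\<in>A. chi E (gcomp E A z) \<le> c"
  shows "chi E A \<le> c"
proof -
  have "\<exists>f. colouring E A c f"
  proof (rule piecewise[where S = "gcomp E A" and E = E])
    show "\<forall>x\<in>A. x \<in> gcomp E A x" by (simp add: gcomp_refl)
    show "\<forall>x\<in>A. \<forall>y\<in>A. E x y \<longrightarrow> gcomp E A x = gcomp E A y \<and> E x y"
    proof (intro ballI impI conjI)
      fix x y assume "x \<in> A" "y \<in> A" "E x y"
      hence "y \<in> gcomp E A x" using gcomp_step[OF gcomp_refl] by metis
      thus "gcomp E A x = gcomp E A y" using gcomp_eq assms(3) by metis
    qed
    show "\<forall>x\<in>A. \<exists>g. colouring E (gcomp E A x) c g"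
      using piece_colouring assms gcomp_sub by (metis finite_subset)
  qed
  thus ?thesis using chi_le by blast
qed


locale gs =
  fixes V :: "'a set" and E :: "'a \<Rightarrow> 'a \<Rightarrow> bool" and n :: nat and W :: "nat \<Rightarrow> 'a set"
  assumes sg: "simple_graph V E" and gr: "grading V n W"
begin

lemma finV: "finite V" using sg unfolding simple_graph_def by blast
lemma irr: "irreflp E" using sg unfolding simple_graph_def irreflp_def by blast
lemma symE: "E a b \<Longrightarrow> E b a" using sg unfolding simple_graph_def by blast
lemma inV: "E a b \<Longrightarrow> a \<in> V \<and> b \<in> V" using sg unfolding simple_graph_def by blast

definition lev :: "'a \<Rightarrow> nat" where "lev x = (THE i. i < n \<and> x \<in> W i)"

lemma lev_uniq: "i < n \<Longrightarrow> j < n \<Longrightarrow> x \<in> W i \<Longrightarrow> x \<in> W j \<Longrightarrow> i = j"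
  using gr unfolding grading_def by blast

lemma lev_eq: "i < n \<Longrightarrow> x \<in> W i \<Longrightarrow> lev x = i"
  unfolding lev_def using lev_uniq by blast

lemma lev: "x \<in> V \<Longrightarrow> lev x < n \<and> x \<in> W (lev x)"
proof -
  assume "x \<in> V"
  then obtain i where "i < n" "x \<in> W i" using gr unfolding grading_def by blast
  thus ?thesis using lev_eq by simp
qed

lemma W_sub: "i < n \<Longrightarrow> W i \<subseteq> V" using gr unfolding grading_def by blast

lemma earlier_iff: "u \<in> V \<Longrightarrow> x \<in> V \<Longrightarrow> earlier n W u x \<longleftrightarrow> lev u < lev x"
  unfolding earlier_def using lev lev_eq by metis

definition Y :: "nat \<Rightarrow> 'a set" where "Y k = {x \<in> V. k \<le> lev x}"

lemma Y_sub: "Y k \<subseteq> V" unfolding Y_def by blast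
lemma Y_mono: "k \<le> k' \<Longrightarrow> Y k' \<subseteq> Y k" unfolding Y_def by auto
lemma Y_empty: "n \<le> k \<Longrightarrow> Y k = {}" unfolding Y_def using lev by fastforce

definition D :: "'a \<Rightarrow> 'a set" where "D x = gcomp E (Y (lev x)) x"

definition prof :: "nat \<Rightarrow> nat \<Rightarrow> 'a \<Rightarrow> 'a set set" where
  "prof c k x = {X. X \<subseteq> Y (Suc k) \<and> connected_in E X \<and> c < chi E X \<and> (\<exists>z\<in>X. E x z)}"

definition NP :: "nat \<Rightarrow> nat \<Rightarrow> 'a \<Rightarrow> bool" where
  "NP c k x \<longleftrightarrow> (\<exists>p. \<forall>y. prof c k y = prof c k x \<longrightarrow> E y p)"

lemma NP_bound: "NP c k x \<Longrightarrow> k < n"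
proof (rule ccontr)
  assume "NP c k x" "\<not> k < n"
  hence "Y (Suc k) = {}" using Y_empty by simp
  hence "prof c k y = {}" for y unfolding prof_def connected_in_def by auto
  then obtain p where "\<forall>y. E y p" using \<open>NP c k x\<close> unfolding NP_def by auto
  thus False using irr by (auto dest: irreflpD)
qed

lemma ball1: "ball V E v 1 = insert v {y \<in> V. E v y}"
  by (auto simp: One_nat_def)

lemma fin_ball: "finite (ball V E v 1)" using finV by (simp add: ball1)

lemma chi_ball_le: "v \<in> V \<Longrightarrow> chi E (ball V E v 1) \<le> chi_rho V E 1"
  unfolding chi_rho_def using finV by (auto intro!: Max_ge)

lemma key:
  assumes xV: "x \<in> V" and yV: "y \<in> V" and exy: "E x y" and lt: "lev x < lev y"
    and big: "c + chi_rho V E 1 < chi E (D y)"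
  shows "NP c (lev x) x"
proof -
  define i where "i = lev x"
  define Q where "Q = gcomp E (Y (Suc i)) y"
  have yY: "y \<in> Y (Suc i)" using lt yV by (simp add: Y_def i_def)
  have QY: "Q \<subseteq> Y (Suc i)" unfolding Q_def using gcomp_sub[OF yY] .
  have finQ: "finite Q" using QY Y_sub finV finite_subset by metis
  have "D y \<subseteq> Q" unfolding D_def Q_def
    by (rule gcomp_mono, rule Y_mono) (use lt i_def in simp)
  hence chiQ: "chi E (D y) \<le> chi E Q" using chi_mono finQ irr by blast
  define Nu where "Nu = {z. E x z}"
  have "Q \<inter> Nu \<subseteq> ball V E x 1" unfolding ball1 Nu_def using inV by auto
  hence c1: "chi E (Q \<inter> Nu) \<le> chi_rho V E 1"
    using chi_mono[OF _ fin_ball irr] chi_ball_le[OF xV] le_trans by blast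
  have "Q = (Q \<inter> Nu) \<union> (Q - Nu)" by blast
  hence "chi E Q \<le> chi E (Q \<inter> Nu) + chi E (Q - Nu)"
    using chi_union[of "Q \<inter> Nu" "Q - Nu" E] finQ irr by simp
  hence bigQN: "c < chi E (Q - Nu)" using chiQ big c1 by linarith
  obtain z where zQ: "z \<in> Q - Nu" and bigz: "c < chi E (gcomp E (Q - Nu) z)"
    using chi_by_comps[of "Q - Nu" E c] finQ irr symE bigQN by (meson finite_Diff not_le)
  define X0 where "X0 = gcomp E (Q - Nu) z"
  have X0sub: "X0 \<subseteq> Q - Nu" unfolding X0_def using gcomp_sub[OF zQ] .
  have X0conn: "connected_in E X0" unfolding X0_def using gcomp_connected[OF _ zQ] symE by blast
  have zX0: "z \<in> X0" unfolding X0_def by (rule gcomp_refl)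
  have Qconn: "connected_in E Q" unfolding Q_def using gcomp_connected[OF _ yY] symE by blast
  have yQ: "y \<in> Q" unfolding Q_def by (rule gcomp_refl)
  have yX0: "y \<notin> X0" using X0sub exy unfolding Nu_def by blast
  obtain x0 p where x0: "x0 \<in> X0" and pQ: "p \<in> Q" and pX0: "p \<notin> X0" and ep: "E x0 p"
    using connected_exit[OF Qconn _ zX0 yQ yX0] X0sub by blast
  have pNu: "p \<in> Nu"
  proof (rule ccontr)
    assume "p \<notin> Nu"
    hence "p \<in> X0" unfolding X0_def using gcomp_step[of x0 E "Q - Nu" z p] x0 X0sub ep pQ
      unfolding X0_def by blast
    thus False using pX0 by simp
  qed
  have X0Y: "X0 \<subseteq> Y (Suc i)" using X0sub QY by blast
  have finX0: "finite (insert p X0)" using finQ X0sub pQ finite_subset by (metis Diff_subset insert_subset order_trans)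
  have bigX0: "c < chi E X0" using bigz X0_def by simp
  have notin: "X0 \<notin> prof c i x" unfolding prof_def using X0sub unfolding Nu_def by blast
  have inp: "insert p X0 \<in> prof c i x" unfolding prof_def
  proof (intro CollectI conjI)
    show "insert p X0 \<subseteq> Y (Suc i)" using X0Y pQ QY by blast
    show "connected_in E (insert p X0)" using connected_insert[OF _ X0conn x0 ep] symE by blast
    show "c < chi E (insert p X0)" using bigX0 chi_mono[OF _ finX0 irr, of X0] by force
    show "\<exists>z\<in>insert p X0. E x z" using pNu unfolding Nu_def by blast
  qed
  show ?thesis unfolding NP_def i_def[symmetric]
  proof (rule exI[of _ p], intro allI impI)
    fix y' assume eq: "prof c i y' = prof c i x"
    have "X0 \<notin> prof c i y'" using notin eq by simp
    hence n1: "\<not> (\<exists>z\<in>X0. E y' z)" unfolding prof_def using X0Y X0conn bigX0 by blast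
    have "insert p X0 \<in> prof c i y'" using inp eq by simp
    hence "\<exists>z\<in>insert p X0. E y' z" unfolding prof_def by blast
    thus "E y' p" using n1 by blast
  qed
qed

end


locale gs2 = gs V E n W for V :: "'a set" and E and n and W +
  fixes c w :: nat and VH :: "'a set" and EH :: "'a \<Rightarrow> 'a \<Rightarrow> bool"
  assumes cg: "\<forall>i<n. chi E (W i) \<le> w"
    and sub: "subgraph VH EH V E"
    and NW: "\<forall>u v X. EH u v \<longrightarrow> X \<subseteq> V \<longrightarrow> connected_in E X
           \<longrightarrow> (\<forall>x\<in>X. lev u < lev x \<and> lev v < lev x) \<longrightarrow> c < chi E X
           \<longrightarrow> ((\<exists>x\<in>X. E u x) = (\<exists>x\<in>X. E v x))"
begin

abbreviation "r \<equiv> chi_rho V E 1"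

lemma EH_E: "EH a b \<Longrightarrow> E a b" using sub unfolding subgraph_def by blast
lemma EH_sym: "EH a b \<Longrightarrow> EH b a" using sub unfolding subgraph_def simple_graph_def by blast
lemma EH_V: "EH a b \<Longrightarrow> a \<in> VH \<and> b \<in> VH" using sub unfolding subgraph_def simple_graph_def by blast
lemma VH_V: "VH \<subseteq> V" using sub unfolding subgraph_def by blast
lemma finVH: "finite VH" using sub unfolding subgraph_def simple_graph_def by blast

lemma prof_eq:
  assumes "EH u v" "max (lev u) (lev v) \<le> k"
  shows "prof c k u = prof c k v"
proof (rule set_eqI)
  fix X
  show "X \<in> prof c k u \<longleftrightarrow> X \<in> prof c k v"
  proof (cases "X \<subseteq> Y (Suc k) \<and> connected_in E X \<and> c < chi E X")
    case True
    hence "X \<subseteq> V" "\<forall>x\<in>X. lev u < lev x \<and> lev v < lev x"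
      using Y_sub assms(2) unfolding Y_def by auto
    hence "(\<exists>x\<in>X. E u x) = (\<exists>x\<in>X. E v x)" using NW assms(1) True by blast
    thus ?thesis unfolding prof_def using True by blast
  next
    case False thus ?thesis unfolding prof_def by blast
  qed
qed

definition K :: "'a \<Rightarrow> nat set" where "K x = {k. lev x \<le> k \<and> NP c k x}"
definition N1 :: "'a set" where "N1 = {x \<in> VH. K x \<noteq> {}}"
definition kk :: "'a \<Rightarrow> nat" where "kk x = Max (K x)"
definition pp :: "'a \<Rightarrow> 'a" where
  "pp x = (SOME p. \<forall>y. prof c (kk x) y = prof c (kk x) x \<longrightarrow> E y p)"

lemma finK: "finite (K x)"
  by (rule finite_subset[of _ "{..<n}"]) (auto simp: K_def dest: NP_bound)

lemma kk_in: "x \<in> N1 \<Longrightarrow> kk x \<in> K x"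
  unfolding kk_def N1_def using finK Max_in by blast

lemma pp_adj: "x \<in> N1 \<Longrightarrow> E x (pp x)"
proof -
  assume "x \<in> N1"
  hence "NP c (kk x) x" using kk_in K_def by blast
  hence "\<forall>y. prof c (kk x) y = prof c (kk x) x \<longrightarrow> E y (pp x)"
    unfolding NP_def pp_def by (rule someI_ex)
  thus ?thesis by blast
qed

lemma pp_eq0:
  assumes e: "EH u v" and uN: "u \<in> N1" and vN: "v \<in> N1" and le: "lev u \<le> lev v"
  shows "pp u = pp v"
proof -
  have same: "k \<in> K u \<longleftrightarrow> k \<in> K v" if "lev v \<le> k" for k
  proof -
    have "prof c k u = prof c k v" using prof_eq[OF e] that le by simp
    hence "NP c k u \<longleftrightarrow> NP c k v" unfolding NP_def by simp
    thus ?thesis unfolding K_def using that le by auto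
  qed
  have kv: "kk v \<in> K v" using kk_in vN .
  hence kvl: "lev v \<le> kk v" unfolding K_def by simp
  hence "kk v \<in> K u" using same kv by blast
  hence "kk v \<le> kk u" unfolding kk_def using finK Max_ge by blast
  moreover have "kk u \<in> K u" using kk_in uN .
  ultimately have "kk u \<in> K v" using same kvl by auto
  hence "kk u \<le> kk v" unfolding kk_def using finK Max_ge by blast
  hence kE: "kk u = kk v" using \<open>kk v \<le> kk u\<close> by simp
  have "prof c (kk u) u = prof c (kk u) v" using prof_eq[OF e] kE kvl le by simp
  thus ?thesis unfolding pp_def kE by simp
qed

lemma pp_eq: "EH u v \<Longrightarrow> u \<in> N1 \<Longrightarrow> v \<in> N1 \<Longrightarrow> pp u = pp v"
  using pp_eq0 EH_sym by (metis nat_le_linear)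

lemma colB: "\<exists>f. colouring EH N1 r f"
proof (rule piecewise[where S = "\<lambda>x. ball V E (pp x) 1" and E = E])
  show "\<forall>x\<in>N1. x \<in> ball V E (pp x) 1" using pp_adj symE inV by (metis (mono_tags, lifting) ball1 insertCI mem_Collect_eq)
  show "\<forall>x\<in>N1. \<forall>y\<in>N1. EH x y \<longrightarrow> ball V E (pp x) 1 = ball V E (pp y) 1 \<and> E x y"
    using pp_eq EH_E by metis
  show "\<forall>x\<in>N1. \<exists>g. colouring E (ball V E (pp x) 1) r g"
    using piece_colouring[OF fin_ball irr] chi_ball_le pp_adj inV by metis
qed

definition Unsat :: "'a set" where "Unsat = {x \<in> VH. chi E (D x) \<le> c + r}"
definition mk :: "'a \<Rightarrow> nat" where
  "mk x = (LEAST k. k \<le> lev x \<and> chi E (gcomp E (Y k) x) \<le> c + r)"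
definition SS :: "'a \<Rightarrow> 'a set" where "SS x = gcomp E (Y (mk x)) x"

lemma mk_prop: "x \<in> Unsat \<Longrightarrow> mk x \<le> lev x \<and> chi E (SS x) \<le> c + r"
  unfolding SS_def mk_def Unsat_def D_def by (rule LeastI[of _ "lev x"]) auto

lemma mk_min: "k \<le> lev x \<Longrightarrow> chi E (gcomp E (Y k) x) \<le> c + r \<Longrightarrow> mk x \<le> k"
  unfolding mk_def by (rule Least_le) simp

lemma SS_eq0:
  assumes e: "E x y" and xU: "x \<in> Unsat" and yU: "y \<in> Unsat" and le: "mk x \<le> mk y"
  shows "SS x = SS y"
proof -
  have xV: "x \<in> V" "y \<in> V" using xU yU VH_V unfolding Unsat_def by auto
  have "y \<in> Y (mk y)" using mk_prop[OF yU] xV unfolding Y_def by simp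
  hence yY: "y \<in> Y (mk x)" using Y_mono[OF le] by blast
  have xY: "x \<in> Y (mk x)" using mk_prop[OF xU] xV unfolding Y_def by simp
  have "y \<in> gcomp E (Y (mk x)) x" using gcomp_step[of x E "Y (mk x)" x y, OF gcomp_refl xY yY e] .
  hence ceq: "gcomp E (Y (mk x)) y = SS x" unfolding SS_def using gcomp_eq symE by metis
  hence "chi E (gcomp E (Y (mk x)) y) \<le> c + r" using mk_prop[OF xU] by simp
  moreover have "mk x \<le> lev y" using le mk_prop[OF yU] by simp
  ultimately have "mk y \<le> mk x" using mk_min by blast
  hence "mk x = mk y" using le by simp
  thus ?thesis using ceq unfolding SS_def by simp
qed

lemma SS_eq: "E x y \<Longrightarrow> x \<in> Unsat \<Longrightarrow> y \<in> Unsat \<Longrightarrow> SS x = SS y"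
  using SS_eq0 symE by (metis nat_le_linear)

lemma colA: "\<exists>f. colouring EH Unsat (c + r) f"
proof (rule piecewise[where S = SS and E = E])
  show "\<forall>x\<in>Unsat. x \<in> SS x" unfolding SS_def by (simp add: gcomp_refl)
  show "\<forall>x\<in>Unsat. \<forall>y\<in>Unsat. EH x y \<longrightarrow> SS x = SS y \<and> E x y"
    using SS_eq EH_E by metis
  show "\<forall>x\<in>Unsat. \<exists>g. colouring E (SS x) (c + r) g"
  proof
    fix x assume xU: "x \<in> Unsat"
    have "x \<in> Y (mk x)" using mk_prop[OF xU] xU VH_V unfolding Y_def Unsat_def by auto
    hence "finite (SS x)" unfolding SS_def using gcomp_sub Y_sub finV finite_subset by metis
    thus "\<exists>g. colouring E (SS x) (c + r) g" using piece_colouring[OF _ irr] mk_prop[OF xU] by blast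
  qed
qed

definition Cset :: "'a set" where "Cset = VH - Unsat - N1"

lemma C_lev0: "EH x y \<Longrightarrow> x \<in> Cset \<Longrightarrow> y \<in> Cset \<Longrightarrow> \<not> lev x < lev y"
proof
  assume e: "EH x y" and xC: "x \<in> Cset" and yC: "y \<in> Cset" and lt: "lev x < lev y"
  have V: "x \<in> V" "y \<in> V" using xC yC VH_V unfolding Cset_def by auto
  have "c + r < chi E (D y)" using yC unfolding Cset_def Unsat_def by auto
  hence "NP c (lev x) x" using key[OF V EH_E[OF e] lt] by simp
  hence "x \<in> N1" using xC unfolding N1_def K_def Cset_def by auto
  thus False using xC unfolding Cset_def by simp
qed

lemma colC: "\<exists>f. colouring EH Cset w f"
proof (rule piecewise[where S = "\<lambda>x. W (lev x)" and E = E])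
  show "\<forall>x\<in>Cset. x \<in> W (lev x)" using lev VH_V unfolding Cset_def by blast
  show "\<forall>x\<in>Cset. \<forall>y\<in>Cset. EH x y \<longrightarrow> W (lev x) = W (lev y) \<and> E x y"
    using C_lev0 EH_sym EH_E by (metis nat_neq_iff)
  show "\<forall>x\<in>Cset. \<exists>g. colouring E (W (lev x)) w g"
  proof
    fix x assume "x \<in> Cset"
    hence "lev x < n" using lev VH_V unfolding Cset_def by blast
    thus "\<exists>g. colouring E (W (lev x)) w g"
      using piece_colouring[OF _ irr] cg W_sub finV finite_subset by metis
  qed
qed

lemma main: "chi EH VH \<le> c + r + r + w"
proof -
  obtain fA where "colouring EH Unsat (c + r) fA" using colA by blast
  moreover obtain fB where "colouring EH N1 r fB" using colB by blast
  ultimately obtain fAB where "colouring EH (Unsat \<union> N1) (c + r + r) fAB"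
    using colouring_union by blast
  moreover obtain fC where "colouring EH Cset w fC" using colC by blast
  ultimately obtain f where f: "colouring EH (Unsat \<union> N1 \<union> Cset) (c + r + r + w) f"
    using colouring_union by blast
  have "Unsat \<union> N1 \<union> Cset = VH" unfolding Cset_def Unsat_def N1_def by blast
  thus ?thesis using chi_le f by metis
qed

end

theorem mainTheorem3:
  fixes V :: "'a set" and E :: "'a \<Rightarrow> 'a \<Rightarrow> bool"
    and VH :: "'a set" and EH :: "'a \<Rightarrow> 'a \<Rightarrow> bool"
    and W :: "nat \<Rightarrow> 'a set" and n w c :: nat
  assumes "simple_graph V E"
    and "colourable_grading E V n W w"
    and "subgraph VH EH V E"
    and "chi EH VH > w + 2 * (c + chi_rho V E 1)"
  shows "\<exists>u v X. EH u v \<and> X \<subseteq> V \<and> connected_in E X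
           \<and> (\<forall>x\<in>X. earlier n W u x \<and> earlier n W v x)
           \<and> ((\<exists>x\<in>X. E u x) \<noteq> (\<exists>x\<in>X. E v x))
           \<and> chi E X > c"
proof (rule ccontr)
  assume neg: "\<not> ?thesis"
  interpret G: gs V E n W
    using assms(1,2) unfolding colourable_grading_def by unfold_locales auto
  have NW: "\<forall>u v X. EH u v \<longrightarrow> X \<subseteq> V \<longrightarrow> connected_in E X
           \<longrightarrow> (\<forall>x\<in>X. G.lev u < G.lev x \<and> G.lev v < G.lev x) \<longrightarrow> c < chi E X
           \<longrightarrow> ((\<exists>x\<in>X. E u x) = (\<exists>x\<in>X. E v x))"
  proof (intro allI impI)
    fix u v X assume e: "EH u v" and XV: "X \<subseteq> V" and cX: "connected_in E X"
      and lv: "\<forall>x\<in>X. G.lev u < G.lev x \<and> G.lev v < G.lev x" and bX: "c < chi E X"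
    have uv: "u \<in> V" "v \<in> V" using e assms(3) unfolding subgraph_def simple_graph_def by blast+
    have "\<forall>x\<in>X. earlier n W u x \<and> earlier n W v x"
      using lv XV G.earlier_iff uv by blast
    thus "(\<exists>x\<in>X. E u x) = (\<exists>x\<in>X. E v x)" using neg e XV cX bX by blast
  qed
  interpret H: gs2 V E n W c w VH EH
    using assms(2,3) NW unfolding colourable_grading_def by unfold_locales auto
  have "chi EH VH \<le> c + chi_rho V E 1 + chi_rho V E 1 + w" by (rule H.main)
  thus False using assms(4) by (simp add: algebra_simps)
qed

end
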